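(* Consider the convex vector optimization problem of minimizing $f(x)$ with respect to $\le_C$ subject to $h(x)\le 0$ (with $C\subseteq\mathbb{R}^q$ a nontrivial pointed convex cone with nonempty interior, $h:\mathbb{R}^n\to\mathbb{R}^m$ continuous and $\mathbb{R}^m_+$-convex, $f:\mathbb{R}^n\to\mathbb{R}^q$ continuous and $C$-convex), with upper image $\mathcal{P}=\operatorname{cl}(f(\mathcal{X})+C)$, where $\mathcal{X}=\{x\mid h(x)\le0\}$, and let $\mathcal{P}_\infty$ be the recession cone of $\mathcal{P}$. Let $\delta\ge 0$, let $\mathcal{Z}\subseteq\mathbb{R}^q$ be a finite $\delta$-inner approximation of $\mathcal{P}_\infty^+$, and let $\mathcal{Y}\subseteq\mathbb{R}^q$ be a finite set with $(\operatorname{cone}\mathcal{Z})^+=\operatorname{cone}\mathcal{Y}$. Then $\mathcal{Y}$ is a finite $\delta$-outer approximation of $\mathcal{P}_\infty$.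
   Context: Norms are Euclidean, $B(c,r)=\{y\mid\|y-c\|\le r\}$, and $d^H(A,B)=\max\{\sup_{a\in A}\inf_{b\in B}\|a-b\|,\sup_{b\in B}\inf_{a\in A}\|a-b\|\}$ is the Hausdorff distance. For $A\subseteq\mathbb{R}^q$: $A^+=\{w\mid w^\mathsf{T} a\ge0\ \forall a\in A\}$ is the dual cone, $\operatorname{cone}A$ is the set of all finite nonnegative combinations of points of $A$ (with $\operatorname{cone}\emptyset=\{0\}$), and the recession cone is $A_\infty=\{d\mid a+\lambda d\in A\ \forall a\in A,\lambda\ge0\}$. For a convex cone $K\subseteq\mathbb{R}^q$, a finite set $\mathcal{Y}$ is a finite $\delta$-outer approximation of $K$ if $K\subseteq\operatorname{cone}\mathcal{Y}$ and $d^H(K\cap B(0,1),\operatorname{cone}\mathcal{Y}\cap B(0,1))\le\delta$; a finite set $\mathcal{Z}$ is a finite $\delta$-inner approximation of $K$ if $\operatorname{cone}\mathcal{Z}\subseteq K$ and $d^H(K\cap B(0,1),\operatorname{cone}\mathcal{Z}\cap B(0,1))\le\delta$. *)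

theory Defs
  imports "HOL-Analysis.Analysis"
begin

definition dual_cone :: "('a::euclidean_space) set \<Rightarrow> 'a set" where
  "dual_cone A = {w. \<forall>a\<in>A. w \<bullet> a \<ge> 0}"

definition cone_gen :: "('a::real_vector) set \<Rightarrow> 'a set" where
  "cone_gen A = {y. \<exists>S u. finite S \<and> S \<subseteq> A \<and> (\<forall>a\<in>S. u a \<ge> 0) \<and> y = (\<Sum>a\<in>S. u a *\<^sub>R a)}"

definition rec_cone :: "('a::real_vector) set \<Rightarrow> 'a set" where
  "rec_cone A = {d. \<forall>a\<in>A. \<forall>t::real. t \<ge> 0 \<longrightarrow> a + t *\<^sub>R d \<in> A}"

definition haus_dist :: "('a::metric_space) set \<Rightarrow> 'a set \<Rightarrow> real" where
  "haus_dist A B = max (SUP a\<in>A. INF b\<in>B. dist a b) (SUP b\<in>B. INF a\<in>A. dist a b)"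

definition outer_approx :: "real \<Rightarrow> ('a::euclidean_space) set \<Rightarrow> 'a set \<Rightarrow> bool" where
  "outer_approx \<delta> K Y \<longleftrightarrow> finite Y \<and> K \<subseteq> cone_gen Y \<and>
     haus_dist (K \<inter> cball 0 1) (cone_gen Y \<inter> cball 0 1) \<le> \<delta>"

definition inner_approx :: "real \<Rightarrow> ('a::euclidean_space) set \<Rightarrow> 'a set \<Rightarrow> bool" where
  "inner_approx \<delta> K Z \<longleftrightarrow> finite Z \<and> cone_gen Z \<subseteq> K \<and>
     haus_dist (K \<inter> cball 0 1) (cone_gen Z \<inter> cball 0 1) \<le> \<delta>"

definition cone_le :: "'a set \<Rightarrow> ('a::ab_group_add) \<Rightarrow> 'a \<Rightarrow> bool" where
  "cone_le C y z \<longleftrightarrow> z - y \<in> C"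

definition cone_convex_fun :: "('b::real_vector) set \<Rightarrow> ('a::real_vector \<Rightarrow> 'b) \<Rightarrow> bool" where
  "cone_convex_fun C f \<longleftrightarrow> (\<forall>x y. \<forall>t::real. 0 \<le> t \<and> t \<le> 1 \<longrightarrow>
      cone_le C (f (t *\<^sub>R x + (1 - t) *\<^sub>R y)) (t *\<^sub>R f x + (1 - t) *\<^sub>R f y))"

definition nonneg_orthant :: "(real^'m) set" where
  "nonneg_orthant = {y. \<forall>i. 0 \<le> y $ i}"

end

theory Submission
  imports Defs
begin


lemma zero_cone_gen: "0 \<in> cone_gen A"
  unfolding cone_gen_def by (rule CollectI, rule exI[of _ "{}"]) auto

lemma haus_part:
  fixes A B :: "'a::euclidean_space set"
  assumes "haus_dist A B \<le> d" "A \<subseteq> cball 0 1" "0 \<in> B" "w \<in> A" "d < e"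
  shows "\<exists>m\<in>B. dist w m < e"
proof -
  have bb: "bdd_below ((\<lambda>b. dist a b) ` B)" for a by (rule bdd_belowI[of _ 0]) auto
  have le1: "(INF b\<in>B. dist a b) \<le> 1" if "a \<in> A" for a
  proof -
    have "(INF b\<in>B. dist a b) \<le> dist a 0" by (rule cINF_lower[OF bb assms(3)])
    also have "\<dots> \<le> 1" using assms(2) that by auto
    finally show ?thesis .
  qed
  have "(INF b\<in>B. dist w b) \<le> (SUP a\<in>A. INF b\<in>B. dist a b)"
    by (rule cSUP_upper[OF assms(4)]) (use le1 in \<open>auto intro!: bdd_aboveI[of _ 1]\<close>)
  also have "\<dots> \<le> d" using assms(1) unfolding haus_dist_def by simp
  finally have "(INF b\<in>B. dist w b) < e" using assms(5) by simp
  then show ?thesis using cINF_less_iff[of B "\<lambda>b. dist w b" e] bb assms(3) by auto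
qed

lemma main:
  fixes K Z Y :: "'a::euclidean_space set"
  assumes Kcl: "closed K" and Kcv: "convex K" and K0: "0 \<in> K"
    and Kadd: "\<And>a b. a \<in> K \<Longrightarrow> b \<in> K \<Longrightarrow> a + b \<in> K"
    and Ksc: "\<And>a t. a \<in> K \<Longrightarrow> t \<ge> 0 \<Longrightarrow> t *\<^sub>R a \<in> K"
    and inn: "inner_approx \<delta> (dual_cone K) Z"
    and YZ: "dual_cone (cone_gen Z) = cone_gen Y" and Yf: "finite Y"
  shows "outer_approx \<delta> K Y"
proof -
  let ?D = "dual_cone K" let ?M = "cone_gen Z" let ?L = "cone_gen Y"
  have MD: "?M \<subseteq> ?D" and hd: "haus_dist (?D \<inter> cball 0 1) (?M \<inter> cball 0 1) \<le> \<delta>"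
    using inn unfolding inner_approx_def by auto
  have KL: "K \<subseteq> ?L"
  proof
    fix k assume k: "k \<in> K"
    have "\<forall>z\<in>?M. k \<bullet> z \<ge> 0" using MD k unfolding dual_cone_def by (auto simp: inner_commute)
    then show "k \<in> ?L" using YZ unfolding dual_cone_def by auto
  qed
  have dnn: "0 \<le> \<delta>"
  proof (rule ccontr)
    assume "\<not> 0 \<le> \<delta>"
    then have e0: "0 < - \<delta>" by simp
    have z1: "(0::'a) \<in> ?D \<inter> cball 0 1" unfolding dual_cone_def by simp
    have z2: "(0::'a) \<in> ?M \<inter> cball 0 1" using zero_cone_gen by simp
    have sub: "?D \<inter> cball 0 1 \<subseteq> cball 0 1" by (rule Int_lower2)
    have lt: "\<delta> < \<delta> + (- \<delta>)" using e0 by simp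
    obtain m :: 'a where "dist 0 m < \<delta> + (- \<delta>)"
      using haus_part[OF hd sub z2 z1 lt] by blast
    then show False using zero_le_dist[of 0 m] by linarith
  qed
  have key: "\<exists>p\<in>K \<inter> cball 0 1. dist p y \<le> \<delta>" if y: "y \<in> ?L" "norm y \<le> 1" for y
  proof -
    define p where "p = closest_point K y"
    have pK: "p \<in> K" unfolding p_def using closest_point_in_set[OF Kcl] K0 by auto
    have dot: "\<And>x. x \<in> K \<Longrightarrow> (y - p) \<bullet> (x - p) \<le> 0"
      unfolding p_def by (rule closest_point_dot[OF Kcv Kcl])
    have "(y - p) \<bullet> (0 - p) \<le> 0" by (rule dot[OF K0])
    moreover have "(y - p) \<bullet> (2 *\<^sub>R p - p) \<le> 0" by (rule dot[OF Ksc[OF pK]]) simp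
    ultimately have orth: "(y - p) \<bullet> p = 0" by (simp add: algebra_simps)
    have kk: "(p - y) \<bullet> k \<ge> 0" if "k \<in> K" for k
      using dot[OF Kadd[OF that pK]] by (simp add: algebra_simps inner_commute)
    have np2: "norm y ^ 2 = norm p ^ 2 + norm (y - p) ^ 2"
      using orth by (simp add: power2_norm_eq_inner algebra_simps inner_commute)
    have pB: "norm p \<le> 1"
    proof -
      have "norm p ^ 2 \<le> norm y ^ 2" using np2 by simp
      then have "norm p \<le> norm y" by (rule power2_le_imp_le) simp
      then show ?thesis using y(2) by simp
    qed
    show ?thesis
    proof (cases "p = y")
      case True then show ?thesis using pK pB dnn by (intro bexI[of _ p]) auto
    next
      case False
      define e where "e = norm (p - y)"
      have e0: "e > 0" using False unfolding e_def by simp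
      define w where "w = (1 / e) *\<^sub>R (p - y)"
      have wD: "w \<in> ?D \<inter> cball 0 1"
        using kk e0 unfolding dual_cone_def w_def e_def by auto
      have e2: "e ^ 2 = y \<bullet> y - p \<bullet> p"
        using np2 unfolding e_def by (simp add: power2_norm_eq_inner norm_minus_commute)
      have "(p - y) \<bullet> y = - (e ^ 2)" using orth e2 by (simp add: algebra_simps inner_commute)
      then have wy: "w \<bullet> y = - e" using e0 unfolding w_def by (simp add: power2_eq_square)
      have "e < \<delta> + \<epsilon>" if eps: "\<epsilon> > 0" for \<epsilon>
      proof -
        obtain m where m: "m \<in> ?M \<inter> cball 0 1" "dist w m < \<delta> + \<epsilon>"
          using haus_part[OF hd Int_lower2 _ wD, of "\<delta> + \<epsilon>"] eps zero_cone_gen[of Z] by force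
        have my: "y \<bullet> m \<ge> 0" using m(1) y(1) YZ[symmetric] unfolding dual_cone_def by auto
        have "e = (m - w) \<bullet> y - m \<bullet> y" using wy by (simp add: algebra_simps)
        also have "\<dots> \<le> (m - w) \<bullet> y" using my by (simp add: inner_commute)
        also have "\<dots> \<le> norm (m - w) * norm y" by (rule norm_cauchy_schwarz)
        also have "\<dots> \<le> norm (m - w)" using y(2)
          by (simp add: mult_left_le)
        also have "\<dots> < \<delta> + \<epsilon>" using m(2) by (simp add: dist_norm norm_minus_commute)
        finally show ?thesis .
      qed
      then have "e \<le> \<delta>" by (meson field_le_epsilon less_imp_le)
      then show ?thesis using pK pB unfolding e_def by (auto simp: dist_norm)
    qed
  qed
  have s1: "(SUP a\<in>K \<inter> cball 0 1. INF b\<in>?L \<inter> cball 0 1. dist a b) \<le> \<delta>"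
  proof (rule cSUP_least)
    show "K \<inter> cball 0 1 \<noteq> {}" using K0 by auto
    fix a assume a: "a \<in> K \<inter> cball 0 1"
    have "(INF b\<in>?L \<inter> cball 0 1. dist a b) \<le> dist a a"
      by (rule cINF_lower) (use a KL in \<open>auto intro!: bdd_belowI[of _ 0]\<close>)
    then show "(INF b\<in>?L \<inter> cball 0 1. dist a b) \<le> \<delta>" using dnn by simp
  qed
  have s2: "(SUP b\<in>?L \<inter> cball 0 1. INF a\<in>K \<inter> cball 0 1. dist a b) \<le> \<delta>"
  proof (rule cSUP_least)
    show "?L \<inter> cball 0 1 \<noteq> {}" using zero_cone_gen[of Y] by auto
    fix b assume b: "b \<in> ?L \<inter> cball 0 1"
    then obtain p where p: "p \<in> K \<inter> cball 0 1" "dist p b \<le> \<delta>" using key[of b] b by (auto simp: dist_norm)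
    show "(INF a\<in>K \<inter> cball 0 1. dist a b) \<le> \<delta>"
      by (rule cINF_lower2[of "\<lambda>a. dist a b" "K \<inter> cball 0 1" p \<delta>]) (use p in \<open>auto intro!: bdd_belowI[of _ 0]\<close>)
  qed
  show ?thesis unfolding outer_approx_def haus_dist_def using Yf KL s1 s2 by auto
qed

lemma rec_props:
  fixes P :: "'a::real_normed_vector set"
  assumes "closed P"
  shows "closed (rec_cone P)" "0 \<in> rec_cone P"
    "\<And>a b. a \<in> rec_cone P \<Longrightarrow> b \<in> rec_cone P \<Longrightarrow> a + b \<in> rec_cone P"
    "\<And>a t. a \<in> rec_cone P \<Longrightarrow> t \<ge> 0 \<Longrightarrow> t *\<^sub>R a \<in> rec_cone P"
    "convex (rec_cone P)"
proof -
  have eq: "rec_cone P = (\<Inter>a\<in>P. \<Inter>t\<in>{0..}. (\<lambda>d. a + t *\<^sub>R d) -` P)"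
    unfolding rec_cone_def by auto
  show "closed (rec_cone P)" unfolding eq
    by (intro closed_INT ballI closed_vimage assms) (intro continuous_intros)
  show "0 \<in> rec_cone P" unfolding rec_cone_def by simp
  show add: "\<And>a b. a \<in> rec_cone P \<Longrightarrow> b \<in> rec_cone P \<Longrightarrow> a + b \<in> rec_cone P"
    unfolding rec_cone_def
  proof (clarify)
    fix a b x and t :: real
    assume "\<forall>aa\<in>P. \<forall>t\<ge>0. aa + t *\<^sub>R a \<in> P" "\<forall>a\<in>P. \<forall>t\<ge>0. a + t *\<^sub>R b \<in> P" "x \<in> P" "0 \<le> t"
    then have "(x + t *\<^sub>R a) + t *\<^sub>R b \<in> P" by blast
    then show "x + t *\<^sub>R (a + b) \<in> P" by (simp add: scaleR_add_right add.assoc)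
  qed
  show sc: "\<And>a t. a \<in> rec_cone P \<Longrightarrow> t \<ge> 0 \<Longrightarrow> t *\<^sub>R a \<in> rec_cone P"
    unfolding rec_cone_def by simp
  show "convex (rec_cone P)" unfolding convex_def
    by (auto intro!: add sc)
qed


theorem proposition4p4:
  fixes C :: "(real^'q) set"
    and f :: "real^'n \<Rightarrow> real^'q"
    and h :: "real^'n \<Rightarrow> real^'m"
    and \<delta> :: real
    and Z Y :: "(real^'q) set"
  assumes C_cone: "convex C" "cone C"
    and C_nontriv: "C \<noteq> {0}"
    and C_pointed: "C \<inter> uminus ` C = {0}"
    and C_int: "interior C \<noteq> {}"
    and h_cont: "continuous_on UNIV h"
    and h_conv: "cone_convex_fun nonneg_orthant h"
    and f_cont: "continuous_on UNIV f"
    and f_conv: "cone_convex_fun C f"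
    and \<delta>_nonneg: "\<delta> \<ge> 0"
    and Z_inner: "inner_approx \<delta>
        (dual_cone (rec_cone (closure {f x + c | x c. (\<forall>i. h x $ i \<le> 0) \<and> c \<in> C}))) Z"
    and Y_fin: "finite Y"
    and YZ: "dual_cone (cone_gen Z) = cone_gen Y"
  shows "outer_approx \<delta>
        (rec_cone (closure {f x + c | x c. (\<forall>i. h x $ i \<le> 0) \<and> c \<in> C})) Y"
proof -
  let ?P = "closure {f x + c | x c. (\<forall>i. h x $ i \<le> 0) \<and> c \<in> C}"
  have cl: "closed ?P" by simp
  show ?thesis
    by (rule main[OF rec_props(1)[OF cl] rec_props(5)[OF cl] rec_props(2)[OF cl]
          rec_props(3)[OF cl] rec_props(4)[OF cl] Z_inner YZ Y_fin])
qed

end
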